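(* Let $G=(V,E)$ be a (finite or infinite) graph satisfying the $CDE(n,-K)$ condition for some $n>0$, $K>0$. Fix $R>0$ and $x_0\in V$, and let $u$ be a positive solution of the heat equation $\partial_t u=\Delta u$ on the ball $B(x_0,2R)$. Then for every $x\in B(x_0,R)$ and every $t>0$, $$\frac{\Gamma(\sqrt{u})}{u}-\frac{\partial_{t}(\sqrt{u})}{\sqrt{u}}\leq \frac{n}{2t}+\sqrt{\tfrac{1}{2}nKD_{\mu}(D_{w}+1)}+\frac{nD_{\mu}(1+D_{w})}{R}.$$
   Context: Graphs: $G=(V,E)$ is a connected, locally finite graph; each edge $xy$ carries a weight $w_{xy}>0$ (possibly $w_{xy}\neq w_{yx}$), and $\mu:V\to(0,\infty)$ is a vertex measure. Write $y\sim x$ if $xy\in E$, $\deg(x)=\sum_{y\sim x}w_{xy}<\infty$, $D_\mu=\sup_{x\in V}\deg(x)/\mu(x)$, $D_w=\sup_{x\sim y}\deg(x)/w_{xy}$. $d$ is the combinatorial graph distance and $B(x_0,r)=\{v\in V: d(v,x_0)\le r\}$. The Laplacian is $\Delta f(x)=\frac{1}{\mu(x)}\sum_{y\sim x}w_{xy}(f(y)-f(x))$. The gradient forms are $2\Gamma(f,g)=\Delta(fg)-f\Delta g-g\Delta f$, $2\Gamma_2(f,g)=\Delta\Gamma(f,g)-\Gamma(f,\Delta g)-\Gamma(\Delta f,g)$, $\Gamma(f)=\Gamma(f,f)$, $\Gamma_2(f)=\Gamma_2(f,f)$. The graph satisfies $CDE(n,K)$ ($n>0$, $K\in\mathbb R$)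 if for every $f:V\to(0,\infty)$ and every vertex, $\widetilde\Gamma_2(f)\ge\frac1n(\Delta f)^2+K\Gamma(f)$, where $\widetilde\Gamma_2(f)=\Gamma_2(f)-\Gamma\big(f,\frac{\Gamma(f)}{f}\big)$. A positive solution of the heat equation on a set $U\subset V$ is a function $u:V\times[0,\infty)\to(0,\infty)$, continuously differentiable in $t$, with $\partial_t u(x,t)=\Delta u(\cdot,t)(x)$ for all $x\in U$, $t\ge 0$; here $\sqrt u$, $\Gamma(\sqrt u)$ etc. are taken at each fixed time. *)

theory Defs
  imports "HOL-Analysis.Analysis"
begin

text \<open>Weighted graphs: vertex set = UNIV of type 'a, edge relation E (undirected: symmetric),
  edge weights w x y (possibly w x y \<noteq> w y x), vertex measure mu.\<close>

definition nbrs :: "('a \<Rightarrow> 'a \<Rightarrow> bool) \<Rightarrow> 'a \<Rightarrow> 'a set" where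
  "nbrs E x = {y. E x y}"

definition weighted_graph ::
  "('a \<Rightarrow> 'a \<Rightarrow> bool) \<Rightarrow> ('a \<Rightarrow> 'a \<Rightarrow> real) \<Rightarrow> ('a \<Rightarrow> real) \<Rightarrow> bool" where
  "weighted_graph E w mu \<longleftrightarrow>
     (\<forall>x y. E x y \<longrightarrow> E y x) \<and>
     (\<forall>x. \<not> E x x) \<and>
     (\<forall>x y. E\<^sup>*\<^sup>* x y) \<and>
     (\<forall>x. finite (nbrs E x)) \<and>
     (\<forall>x y. E x y \<longrightarrow> w x y > 0) \<and>
     (\<forall>x. mu x > 0)"

definition deg :: "('a \<Rightarrow> 'a \<Rightarrow> bool) \<Rightarrow> ('a \<Rightarrow> 'a \<Rightarrow> real) \<Rightarrow> 'a \<Rightarrow> real" where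
  "deg E w x = (\<Sum>y\<in>nbrs E x. w x y)"

definition D_mu :: "('a \<Rightarrow> 'a \<Rightarrow> bool) \<Rightarrow> ('a \<Rightarrow> 'a \<Rightarrow> real) \<Rightarrow> ('a \<Rightarrow> real) \<Rightarrow> real" where
  "D_mu E w mu = (SUP x. deg E w x / mu x)"

definition D_w :: "('a \<Rightarrow> 'a \<Rightarrow> bool) \<Rightarrow> ('a \<Rightarrow> 'a \<Rightarrow> real) \<Rightarrow> real" where
  "D_w E w = (SUP p\<in>{(x, y). E x y}. deg E w (fst p) / w (fst p) (snd p))"

definition Lap :: "('a \<Rightarrow> 'a \<Rightarrow> bool) \<Rightarrow> ('a \<Rightarrow> 'a \<Rightarrow> real) \<Rightarrow> ('a \<Rightarrow> real)
    \<Rightarrow> ('a \<Rightarrow> real) \<Rightarrow> 'a \<Rightarrow> real" where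
  "Lap E w mu f x = (\<Sum>y\<in>nbrs E x. w x y * (f y - f x)) / mu x"

definition Gam :: "('a \<Rightarrow> 'a \<Rightarrow> bool) \<Rightarrow> ('a \<Rightarrow> 'a \<Rightarrow> real) \<Rightarrow> ('a \<Rightarrow> real)
    \<Rightarrow> ('a \<Rightarrow> real) \<Rightarrow> ('a \<Rightarrow> real) \<Rightarrow> 'a \<Rightarrow> real" where
  "Gam E w mu f g x =
     (Lap E w mu (\<lambda>y. f y * g y) x - f x * Lap E w mu g x - g x * Lap E w mu f x) / 2"

definition Gam2 :: "('a \<Rightarrow> 'a \<Rightarrow> bool) \<Rightarrow> ('a \<Rightarrow> 'a \<Rightarrow> real) \<Rightarrow> ('a \<Rightarrow> real)
    \<Rightarrow> ('a \<Rightarrow> real) \<Rightarrow> ('a \<Rightarrow> real) \<Rightarrow> 'a \<Rightarrow> real" where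
  "Gam2 E w mu f g x =
     (Lap E w mu (Gam E w mu f g) x - Gam E w mu f (Lap E w mu g) x
        - Gam E w mu (Lap E w mu f) g x) / 2"

definition Gam2_tilde :: "('a \<Rightarrow> 'a \<Rightarrow> bool) \<Rightarrow> ('a \<Rightarrow> 'a \<Rightarrow> real) \<Rightarrow> ('a \<Rightarrow> real)
    \<Rightarrow> ('a \<Rightarrow> real) \<Rightarrow> 'a \<Rightarrow> real" where
  "Gam2_tilde E w mu f x =
     Gam2 E w mu f f x - Gam E w mu f (\<lambda>y. Gam E w mu f f y / f y) x"

definition CDE :: "('a \<Rightarrow> 'a \<Rightarrow> bool) \<Rightarrow> ('a \<Rightarrow> 'a \<Rightarrow> real) \<Rightarrow> ('a \<Rightarrow> real)
    \<Rightarrow> real \<Rightarrow> real \<Rightarrow> bool" where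
  "CDE E w mu n K \<longleftrightarrow>
     (\<forall>f. (\<forall>x. f x > 0) \<longrightarrow>
        (\<forall>x. Gam2_tilde E w mu f x \<ge> (Lap E w mu f x)\<^sup>2 / n + K * Gam E w mu f f x))"

definition gdist :: "('a \<Rightarrow> 'a \<Rightarrow> bool) \<Rightarrow> 'a \<Rightarrow> 'a \<Rightarrow> nat" where
  "gdist E x y = (LEAST k. (E ^^ k) x y)"

definition gball :: "('a \<Rightarrow> 'a \<Rightarrow> bool) \<Rightarrow> 'a \<Rightarrow> real \<Rightarrow> 'a set" where
  "gball E x0 r = {v. real (gdist E v x0) \<le> r}"

end

theory Submission
  imports Defs
begin

section \<open>Basic Laplacian facts\<close>

lemma Lap_cong:
  assumes "\<And>y. y \<in> nbrs E x \<Longrightarrow> a y = b y" and "a x = b x"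
  shows "Lap E w mu a x = Lap E w mu b x"
  unfolding Lap_def using assms by (auto intro!: sum.cong arg_cong[where f="\<lambda>s. s / mu x"])

lemma Lap_add: "Lap E w mu (\<lambda>y. a y + b y) x = Lap E w mu a x + Lap E w mu b x"
proof -
  have "(\<Sum>y\<in>nbrs E x. w x y * (a y + b y - (a x + b x))) =
        (\<Sum>y\<in>nbrs E x. w x y * (a y - a x)) + (\<Sum>y\<in>nbrs E x. w x y * (b y - b x))"
    by (simp add: sum.distrib[symmetric] algebra_simps)
  then show ?thesis unfolding Lap_def by (simp add: add_divide_distrib)
qed

lemma Gam_ff: "Lap E w mu (\<lambda>y. f y * f y) x = 2 * Gam E w mu f f x + 2 * f x * Lap E w mu f x"
  unfolding Gam_def by (simp add: field_simps)

lemma Gam2_tilde_expand: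
  fixes E w mu
  assumes fnz: "\<And>y. f y \<noteq> 0"
  defines "L \<equiv> Lap E w mu"
  defines "q \<equiv> \<lambda>y. Gam E w mu f f y / f y"
  shows "2 * Gam2_tilde E w mu f x =
    - L (\<lambda>y. f y * L f y) x + f x * L (L f) x + (L f x)^2 + f x * L q x + q x * L f x"
proof -
  have g1: "Gam E w mu f (L f) x = (L (\<lambda>y. f y * L f y) x - f x * L (L f) x - L f x * L f x)/2"
    unfolding Gam_def L_def by simp
  have g2: "Gam E w mu (L f) f x = (L (\<lambda>y. f y * L f y) x - L f x * L f x - f x * L (L f) x)/2"
    unfolding Gam_def L_def by (simp add: mult.commute)
  have c: "L (\<lambda>y. f y * q y) x = L (Gam E w mu f f) x"
    unfolding L_def by (rule Lap_cong) (auto simp: q_def fnz)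
  have g3: "Gam E w mu f q x = (L (Gam E w mu f f) x - f x * L q x - q x * L f x)/2"
    unfolding Gam_def[of E w mu f q x] using c by (simp add: L_def)
  show ?thesis
    unfolding Gam2_tilde_def Gam2_def q_def[symmetric] L_def[symmetric] g1 g2 g3
    by (simp add: power2_eq_square field_simps)
qed

lemma Gam2_tilde_time:
  fixes E w mu f p x
  assumes fnz: "\<And>y. f y \<noteq> 0"
    and hp: "\<And>y. y \<in> nbrs E x \<Longrightarrow> p y = Lap E w mu f y + Gam E w mu f f y / f y"
    and hpx: "p x = Lap E w mu f x + Gam E w mu f f x / f x"
  shows "2 * Gam2_tilde E w mu f x =
    - Lap E w mu (\<lambda>y. f y * Lap E w mu f y) x
    + (Lap E w mu f x / f x) * Lap E w mu (\<lambda>y. f y * f y) x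
    + f x * Lap E w mu p x - Lap E w mu f x * p x"
proof -
  let ?q = "\<lambda>y. Gam E w mu f f y / f y"
  have "Lap E w mu p x = Lap E w mu (\<lambda>y. Lap E w mu f y + ?q y) x"
    by (rule Lap_cong) (use hp hpx in auto)
  also have "\<dots> = Lap E w mu (Lap E w mu f) x + Lap E w mu ?q x"
    by (rule Lap_add)
  finally have lp: "Lap E w mu p x = Lap E w mu (Lap E w mu f) x + Lap E w mu ?q x" .
  have fx: "f x \<noteq> 0" by (rule fnz)
  show ?thesis
    unfolding Gam2_tilde_expand[of f E w mu x, OF fnz] lp Gam_ff hpx
    using fx by (simp add: field_simps power2_eq_square)
qed

lemma Lapu_sum:
  fixes E w mu f x
  assumes fnz: "\<And>y. f y \<noteq> 0"
  defines "g \<equiv> Lap E w mu f"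
  shows "- Lap E w mu (\<lambda>y. f y * g y) x + (g x / f x) * Lap E w mu (\<lambda>y. f y * f y) x
    = (\<Sum>y\<in>nbrs E x. w x y * (f y)^2 * ((- g y / f y) - (- g x / f x))) / mu x"
proof -
  let ?c = "g x / f x"
  have "- (\<Sum>y\<in>nbrs E x. w x y * (f y * g y - f x * g x))
        + ?c * (\<Sum>y\<in>nbrs E x. w x y * (f y * f y - f x * f x))
      = (\<Sum>y\<in>nbrs E x. - (w x y * (f y * g y - f x * g x)) + ?c * (w x y * (f y * f y - f x * f x)))"
    by (simp add: sum.distrib sum_distrib_left sum_negf sum_subtractf)
  also have "\<dots> = (\<Sum>y\<in>nbrs E x. w x y * (f y)^2 * ((- g y / f y) - (- g x / f x)))"
  proof (rule sum.cong)
    fix y assume "y \<in> nbrs E x"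
    have "f y \<noteq> 0" "f x \<noteq> 0" using fnz by auto
    then show "- (w x y * (f y * g y - f x * g x)) + ?c * (w x y * (f y * f y - f x * f x))
        = w x y * (f y)^2 * ((- g y / f y) - (- g x / f x))"
      by (simp add: field_simps power2_eq_square)
  qed simp
  finally have e: "- (\<Sum>y\<in>nbrs E x. w x y * (f y * g y - f x * g x))
        + ?c * (\<Sum>y\<in>nbrs E x. w x y * (f y * f y - f x * f x))
      = (\<Sum>y\<in>nbrs E x. w x y * (f y)^2 * ((- g y / f y) - (- g x / f x)))" .
  have key: "\<And>S1 S2 S3 (m::real) c. - S1 + c * S2 = S3 \<Longrightarrow> - (S1 / m) + c * (S2 / m) = S3 / m"
  proof -
    fix S1 S2 S3 m c :: real assume "- S1 + c * S2 = S3"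
    then show "- (S1 / m) + c * (S2 / m) = S3 / m" by (auto simp: diff_divide_distrib)
  qed
  show ?thesis
    unfolding Lap_def[of E w mu "\<lambda>y. f y * g y" x] Lap_def[of E w mu "\<lambda>y. f y * f y" x]
    by (rule key[OF e])
qed

lemma key_ineq:
  fixes E w mu f p x and n K :: real
  assumes fpos: "\<And>y. f y > 0"
    and hp: "\<And>y. y \<in> nbrs E x \<Longrightarrow> p y = Lap E w mu f y + Gam E w mu f f y / f y"
    and hpx: "p x = Lap E w mu f x + Gam E w mu f f x / f x"
    and cde: "Gam2_tilde E w mu f x \<ge> (Lap E w mu f x)\<^sup>2 / n + (- K) * Gam E w mu f f x"
  shows "- (Lap E w mu p x * f x - Lap E w mu f x * p x) / (f x)^2
    \<le> (\<Sum>y\<in>nbrs E x. w x y * (f y)^2 * ((- Lap E w mu f y / f y) - (- Lap E w mu f x / f x))) / (mu x * (f x)^2)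
       - (2 / n) * (- Lap E w mu f x / f x)^2 + 2 * K * Gam E w mu f f x / (f x)^2"
proof -
  have fnz: "\<And>y. f y \<noteq> 0" using fpos by (metis less_irrefl)
  define S where "S = (\<Sum>y\<in>nbrs E x. w x y * (f y)^2 * ((- Lap E w mu f y / f y) - (- Lap E w mu f x / f x)))"
  have e: "2 * Gam2_tilde E w mu f x = S / mu x + f x * Lap E w mu p x - Lap E w mu f x * p x"
    using Gam2_tilde_time[OF fnz hp hpx] Lapu_sum[OF fnz, where E=E and w=w and mu=mu and x=x]
    unfolding S_def by simp
  have fx: "f x > 0" by (rule fpos)
  let ?g = "Lap E w mu f x" and ?G = "Gam E w mu f f x" and ?P = "Lap E w mu p x"
  have "S / (mu x * (f x)^2) - (- (?P * f x - ?g * p x) / (f x)^2) = 2 * Gam2_tilde E w mu f x / (f x)^2"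
    unfolding e using fx by (simp add: field_simps power2_eq_square)
  also have "\<dots> \<ge> 2 * (?g\<^sup>2 / n + (- K) * ?G) / (f x)^2"
    using cde fx by (simp add: divide_right_mono)
  finally have "- (?P * f x - ?g * p x) / (f x)^2 \<le> S / (mu x * (f x)^2) - 2 * (?g\<^sup>2 / n + (- K) * ?G) / (f x)^2"
    by linarith
  also have "2 * (?g\<^sup>2 / n + (- K) * ?G) / (f x)^2 = (2 / n) * (- ?g / f x)^2 - 2 * K * ?G / (f x)^2"
    using fx by (simp add: field_simps power2_eq_square)
  finally show ?thesis unfolding S_def by linarith
qed

lemma Gam_ff_sum: "Gam E w mu f f x = (\<Sum>y\<in>nbrs E x. w x y * (f y - f x)^2) / (2 * mu x)"
proof -
  have "(\<Sum>y\<in>nbrs E x. w x y * (f y * f y - f x * f x)) - 2 * f x * (\<Sum>y\<in>nbrs E x. w x y * (f y - f x))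
      = (\<Sum>y\<in>nbrs E x. w x y * (f y - f x)^2)"
    by (simp add: sum_distrib_left sum_subtractf[symmetric] power2_eq_square algebra_simps)
  then show ?thesis unfolding Gam_def Lap_def
    by (simp add: diff_divide_distrib[symmetric] field_simps)
qed

lemma h_le_deg:
  assumes fpos: "\<And>y. f y > 0" and wpos: "\<And>z. z \<in> nbrs E y \<Longrightarrow> w y z > 0" and mpos: "mu y > 0"
  shows "- Lap E w mu f y / f y \<le> deg E w y / mu y"
proof -
  have "(\<Sum>z\<in>nbrs E y. w y z * (f z - f y)) \<ge> (\<Sum>z\<in>nbrs E y. - (w y z * f y))"
  proof (rule sum_mono)
    fix z assume "z \<in> nbrs E y"
    then have "w y z > 0" by (rule wpos)
    moreover have "f z > 0" by (rule fpos)
    ultimately show "- (w y z * f y) \<le> w y z * (f z - f y)" by (simp add: algebra_simps)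
  qed
  then have "- (\<Sum>z\<in>nbrs E y. w y z * (f z - f y)) \<le> deg E w y * f y"
    unfolding deg_def by (simp add: sum_negf sum_distrib_right)
  then have "- (\<Sum>z\<in>nbrs E y. w y z * (f z - f y)) / (mu y * f y) \<le> deg E w y * f y / (mu y * f y)"
    using mpos fpos[of y] by (intro divide_right_mono) auto
  then show ?thesis using mpos fpos[of y] unfolding Lap_def by (simp add: field_simps)
qed

lemma sq_bounds:
  fixes W :: real
  assumes fpos: "\<And>y. f y > 0" and fin: "finite (nbrs E x)"
    and wpos: "\<And>y. y \<in> nbrs E x \<Longrightarrow> w x y > 0" and mpos: "mu x > 0"
    and Lneg: "Lap E w mu f x \<le> 0"
    and Wb: "\<And>y. y \<in> nbrs E x \<Longrightarrow> deg E w x / w x y \<le> W" and W1: "W \<ge> 1"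
  shows "(\<Sum>y\<in>nbrs E x. w x y * (f y)^2) \<le> (1 + W) * deg E w x * (f x)^2"
    and "(\<Sum>y\<in>nbrs E x. w x y * (f y - f x)^2) \<le> W * deg E w x * (f x)^2"
proof -
  let ?N = "nbrs E x"
  have fx: "f x > 0" by (rule fpos)
  have neg: "(\<Sum>y\<in>?N. w x y * (f y - f x)) \<le> 0"
    using Lneg mpos unfolding Lap_def by (simp add: divide_le_0_iff)
  have degnn: "\<And>A. A \<subseteq> ?N \<Longrightarrow> (\<Sum>z\<in>A. w x z) \<le> deg E w x"
    unfolding deg_def using fin wpos by (intro sum_mono2) (auto intro: less_imp_le)
  have sy: "f y \<le> (1 + W) * f x" if y: "y \<in> ?N" for y
  proof -
    have split: "(\<Sum>z\<in>?N. w x z * (f z - f x)) = w x y * (f y - f x) + (\<Sum>z\<in>?N - {y}. w x z * (f z - f x))"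
      using fin y by (simp add: sum.remove)
    have "(\<Sum>z\<in>?N - {y}. w x z * (f z - f x)) \<ge> (\<Sum>z\<in>?N - {y}. - (w x z * f x))"
    proof (rule sum_mono)
      fix z assume "z \<in> ?N - {y}"
      then have "w x z > 0" using wpos by auto
      then show "- (w x z * f x) \<le> w x z * (f z - f x)" using fpos[of z] by (simp add: algebra_simps)
    qed
    also have "(\<Sum>z\<in>?N - {y}. - (w x z * f x)) = - ((\<Sum>z\<in>?N - {y}. w x z) * f x)"
      by (simp add: sum_negf sum_distrib_right)
    also have "\<dots> \<ge> - (deg E w x * f x)"
      using degnn[of "?N - {y}"] fx by (simp add: mult_right_mono)
    finally have "w x y * (f y - f x) \<le> deg E w x * f x" using neg split by linarith
    then have "f y - f x \<le> deg E w x * f x / w x y" using wpos[OF y] by (simp add: field_simps)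
    also have "\<dots> = (deg E w x / w x y) * f x" by simp
    also have "\<dots> \<le> W * f x" by (rule mult_right_mono[OF Wb[OF y] less_imp_le[OF fx]])
    finally show ?thesis by (simp add: algebra_simps)
  qed
  have sumf: "(\<Sum>y\<in>?N. w x y * f y) \<le> deg E w x * f x"
  proof -
    have "(\<Sum>y\<in>?N. w x y * f y) = (\<Sum>y\<in>?N. w x y * (f y - f x)) + deg E w x * f x"
      unfolding deg_def by (simp add: sum_distrib_right sum_distrib_left sum_subtractf algebra_simps)
    then show ?thesis using neg by linarith
  qed
  have "(\<Sum>y\<in>?N. w x y * (f y)^2) \<le> (\<Sum>y\<in>?N. (1 + W) * f x * (w x y * f y))"
  proof (rule sum_mono)
    fix y assume y: "y \<in> ?N"
    have "f y * f y \<le> ((1 + W) * f x) * f y" using sy[OF y] fpos[of y] by (intro mult_right_mono) auto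
    then have "w x y * (f y * f y) \<le> w x y * (((1 + W) * f x) * f y)"
      using wpos[OF y] by (intro mult_left_mono) auto
    then show "w x y * (f y)^2 \<le> (1 + W) * f x * (w x y * f y)"
      by (simp add: power2_eq_square algebra_simps)
  qed
  also have "\<dots> = (1 + W) * f x * (\<Sum>y\<in>?N. w x y * f y)" by (simp add: sum_distrib_left)
  also have "\<dots> \<le> (1 + W) * f x * (deg E w x * f x)"
    using sumf W1 fx by (intro mult_left_mono) auto
  finally show "(\<Sum>y\<in>?N. w x y * (f y)^2) \<le> (1 + W) * deg E w x * (f x)^2"
    by (simp add: power2_eq_square algebra_simps)
  have "(\<Sum>y\<in>?N. w x y * (f y - f x)^2) \<le> (\<Sum>y\<in>?N. w x y * (f x)^2 + (W - 1) * f x * (w x y * f y))"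
  proof (rule sum_mono)
    fix y assume y: "y \<in> ?N"
    have "f y * f y \<le> ((1 + W) * f x) * f y" using sy[OF y] fpos[of y] by (intro mult_right_mono) auto
    then have "(f y - f x)^2 \<le> (f x)^2 + (W - 1) * f x * f y"
      by (simp add: power2_eq_square algebra_simps)
    then have "w x y * (f y - f x)^2 \<le> w x y * ((f x)^2 + (W - 1) * f x * f y)"
      using wpos[OF y] by (intro mult_left_mono) auto
    then show "w x y * (f y - f x)^2 \<le> w x y * (f x)^2 + (W - 1) * f x * (w x y * f y)"
      by (simp add: algebra_simps)
  qed
  also have "\<dots> = deg E w x * (f x)^2 + (W - 1) * f x * (\<Sum>y\<in>?N. w x y * f y)"
    unfolding deg_def by (simp add: sum.distrib sum_distrib_left sum_distrib_right)
  also have "\<dots> \<le> deg E w x * (f x)^2 + (W - 1) * f x * (deg E w x * f x)"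
    using sumf W1 fx by (intro add_left_mono mult_left_mono) auto
  finally show "(\<Sum>y\<in>?N. w x y * (f y - f x)^2) \<le> W * deg E w x * (f x)^2"
    by (simp add: power2_eq_square algebra_simps)
qed

lemma Lap_affine:
  assumes "\<And>y. y \<in> nbrs E x \<Longrightarrow> H y = a + b * (w y x / mu y)"
  shows "Lap E w mu H x = a * (deg E w x / mu x)
     + b * ((\<Sum>y\<in>nbrs E x. w x y * (w y x / mu y)) / mu x) - H x * (deg E w x / mu x)"
proof -
  have "(\<Sum>y\<in>nbrs E x. w x y * (H y - H x))
      = (\<Sum>y\<in>nbrs E x. a * w x y + b * (w x y * (w y x / mu y)) - H x * w x y)"
    by (rule sum.cong) (auto simp: assms algebra_simps)
  also have "\<dots> = a * deg E w x + b * (\<Sum>y\<in>nbrs E x. w x y * (w y x / mu y)) - H x * deg E w x"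
    unfolding deg_def by (simp add: sum.distrib sum_subtractf sum_distrib_left)
  finally show ?thesis unfolding Lap_def by (simp add: diff_divide_distrib add_divide_distrib)
qed

lemma sum_single_nbr:
  assumes "finite A" "x \<in> A" "\<And>z. z \<in> A \<Longrightarrow> z \<noteq> x \<Longrightarrow> F z = 0"
  shows "(\<Sum>z\<in>A. F z) = F x"
proof -
  have "(\<Sum>z\<in>A. F z) = (\<Sum>z\<in>A. if z = x then F x else 0)"
    by (rule sum.cong) (use assms in auto)
  also have "\<dots> = F x" using assms by simp
  finally show ?thesis .
qed

lemma cde_lower_eps:
  fixes n K D \<epsilon> :: real
  assumes sym: "\<And>a b. E a b \<Longrightarrow> E b a" and irr: "\<And>a. \<not> E a a"
    and fin: "\<And>a. finite (nbrs E a)" and wpos: "\<And>a b. E a b \<Longrightarrow> w a b > 0"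
    and mpos: "\<And>a. mu a > 0" and cde: "CDE E w mu n (- K)" and npos: "n > 0"
    and Db: "\<And>z. deg E w z / mu z \<le> D"
    and eps: "\<epsilon> > 0"
  shows "2 * (deg E w x / mu x)^2 / n \<le> (deg E w x / mu x) * (K + 2 * D + \<epsilon> * D / 2)"
proof -
  define f where "f = (\<lambda>z. if z = x then 1 else 1 + \<epsilon>)"
  define d where "d = deg E w x / mu x"
  define S where "S = (\<Sum>y\<in>nbrs E x. w x y * (w y x / mu y)) / mu x"
  have fpos: "\<And>z. f z > 0" unfolding f_def using eps by auto
  have fnz: "\<And>z. f z \<noteq> 0" using fpos by (metis less_irrefl)
  have mnz: "\<And>a. mu a \<noteq> 0" using mpos by (metis less_irrefl)
  have fx: "f x = 1" unfolding f_def by simp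
  have fy: "\<And>y. y \<in> nbrs E x \<Longrightarrow> f y = 1 + \<epsilon>"
    unfolding f_def nbrs_def using irr by auto
  have xin: "\<And>y. y \<in> nbrs E x \<Longrightarrow> x \<in> nbrs E y" unfolding nbrs_def using sym by auto
  have other: "\<And>y z. y \<in> nbrs E x \<Longrightarrow> z \<noteq> x \<Longrightarrow> f z - f y = 0"
    using fy unfolding f_def by auto
  have gy: "Lap E w mu f y = - \<epsilon> * (w y x / mu y)" if y: "y \<in> nbrs E x" for y
  proof -
    have "(\<Sum>z\<in>nbrs E y. w y z * (f z - f y)) = w y x * (f x - f y)"
      by (rule sum_single_nbr) (use fin xin[OF y] other[OF y] in auto)
    then show ?thesis unfolding Lap_def using fx fy[OF y] by simp
  qed
  have Gy: "Gam E w mu f f y = \<epsilon>^2 / 2 * (w y x / mu y)" if y: "y \<in> nbrs E x" for y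
  proof -
    have "(\<Sum>z\<in>nbrs E y. w y z * (f z - f y)^2) = w y x * (f x - f y)^2"
      by (rule sum_single_nbr) (use fin xin[OF y] other[OF y] in auto)
    then show ?thesis unfolding Gam_ff_sum using fx fy[OF y] by (simp add: power2_eq_square)
  qed
  have gx: "Lap E w mu f x = \<epsilon> * d"
  proof -
    have "Lap E w mu f x = (1 + \<epsilon>) * d + 0 * S - f x * d"
      unfolding d_def S_def by (rule Lap_affine) (use fy in simp)
    then show ?thesis using fx by (simp add: algebra_simps)
  qed
  have Gx: "Gam E w mu f f x = \<epsilon>^2 / 2 * d"
  proof -
    have "(\<Sum>y\<in>nbrs E x. w x y * (f y - f x)^2) = (\<Sum>y\<in>nbrs E x. \<epsilon>^2 * w x y)"
      by (rule sum.cong) (auto simp: fy fx)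
    then show ?thesis unfolding Gam_ff_sum d_def deg_def by (simp add: sum_distrib_left[symmetric])
  qed
  let ?g = "Lap E w mu f" and ?q = "\<lambda>y. Gam E w mu f f y / f y"
  have L1: "Lap E w mu (\<lambda>y. f y * ?g y) x = 0 * d + (- (1 + \<epsilon>) * \<epsilon>) * S - (f x * ?g x) * d"
    unfolding d_def S_def by (rule Lap_affine) (simp add: fy gy mnz field_simps)
  have L2: "Lap E w mu ?g x = 0 * d + (- \<epsilon>) * S - ?g x * d"
    unfolding d_def S_def by (rule Lap_affine) (simp add: gy)
  have L3: "Lap E w mu ?q x = 0 * d + (\<epsilon>^2 / (2 * (1 + \<epsilon>))) * S - ?q x * d"
    unfolding d_def S_def by (rule Lap_affine) (use eps in \<open>simp add: fy Gy mnz field_simps\<close>)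
  have two: "2 * Gam2_tilde E w mu f x =
      \<epsilon>^2 * S + \<epsilon>^2 * d^2 / 2 + \<epsilon>^2 * S / (2 * (1 + \<epsilon>)) + \<epsilon>^3 * d^2 / 2"
    unfolding Gam2_tilde_expand[OF fnz] L1 L2 L3 gx Gx fx using eps
    by (simp add: field_simps power2_eq_square power3_eq_cube)
  have cdex: "Gam2_tilde E w mu f x \<ge> (Lap E w mu f x)\<^sup>2 / n + (- K) * Gam E w mu f f x"
    using cde fpos unfolding CDE_def by blast
  have Sb: "S \<le> d * D"
  proof -
    have "(\<Sum>y\<in>nbrs E x. w x y * (w y x / mu y)) \<le> (\<Sum>y\<in>nbrs E x. w x y * D)"
    proof (rule sum_mono)
      fix y assume y: "y \<in> nbrs E x"
      have "w y x \<le> deg E w y"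
        unfolding deg_def using fin xin[OF y] wpos unfolding nbrs_def
        by (intro member_le_sum) (auto intro: less_imp_le)
      then have "w y x / mu y \<le> deg E w y / mu y" using mpos[of y] by (simp add: divide_right_mono)
      also have "\<dots> \<le> D" by (rule Db)
      finally show "w x y * (w y x / mu y) \<le> w x y * D"
        using wpos y unfolding nbrs_def by (intro mult_left_mono) (auto intro: less_imp_le)
    qed
    then show ?thesis unfolding S_def d_def deg_def using mpos[of x]
      by (simp add: sum_distrib_right divide_right_mono)
  qed
  have dnn: "d \<ge> 0" unfolding d_def deg_def using wpos mpos[of x] unfolding nbrs_def
    by (intro divide_nonneg_pos sum_nonneg) (auto intro: less_imp_le)
  have Snn: "S \<ge> 0" unfolding S_def using mpos unfolding nbrs_def
    by (intro divide_nonneg_pos sum_nonneg mult_nonneg_nonneg) (auto intro!: less_imp_le[OF wpos] sym)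
  have dD: "d \<le> D" unfolding d_def by (rule Db)
  have S2: "S / (2 * (1 + \<epsilon>)) \<le> S / 2" using Snn eps by (intro divide_left_mono) auto
  from cdex have "2 * (\<epsilon> * d)^2 / n - K * \<epsilon>^2 * d \<le> 2 * Gam2_tilde E w mu f x"
    unfolding gx Gx by (simp add: field_simps)
  also have "\<dots> = \<epsilon>^2 * (S + d^2 / 2 + S / (2 * (1 + \<epsilon>)) + \<epsilon> * d^2 / 2)"
    unfolding two by (simp add: field_simps power2_eq_square power3_eq_cube)
  finally have "\<epsilon>^2 * (2 * d^2 / n - K * d) \<le> \<epsilon>^2 * (S + d^2 / 2 + S / (2 * (1 + \<epsilon>)) + \<epsilon> * d^2 / 2)"
    by (simp add: field_simps power2_eq_square)
  then have "2 * d^2 / n - K * d \<le> S + d^2 / 2 + S / (2 * (1 + \<epsilon>)) + \<epsilon> * d^2 / 2"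
    using eps by (simp add: mult_le_cancel_left)
  also have "\<dots> \<le> d * D + d * D / 2 + d * D / 2 + \<epsilon> * (d * D) / 2"
  proof -
    have "d^2 \<le> d * D" using dnn dD by (simp add: power2_eq_square mult_left_mono)
    then show ?thesis using Sb S2 eps by (smt (verit, ccfv_SIG) mult_left_mono divide_right_mono)
  qed
  finally show ?thesis unfolding d_def[symmetric] by (simp add: algebra_simps)
qed

lemma cde_lower:
  fixes n K D :: real
  assumes sym: "\<And>a b. E a b \<Longrightarrow> E b a" and irr: "\<And>a. \<not> E a a"
    and fin: "\<And>a. finite (nbrs E a)" and wpos: "\<And>a b. E a b \<Longrightarrow> w a b > 0"
    and mpos: "\<And>a. mu a > 0" and cde: "CDE E w mu n (- K)" and npos: "n > 0"
    and Db: "\<And>z. deg E w z / mu z \<le> D" and Kpos: "K > 0"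
  shows "deg E w x / mu x \<le> n * (D + K / 2)"
proof -
  define d where "d = deg E w x / mu x"
  have dnn: "d \<ge> 0" unfolding d_def deg_def using wpos mpos[of x] unfolding nbrs_def
    by (intro divide_nonneg_pos sum_nonneg) (auto intro: less_imp_le)
  have dD: "d \<le> D" unfolding d_def by (rule Db)
  show ?thesis
  proof (cases "d = 0")
    case True
    then have "0 \<le> D + K / 2" using dD Kpos by simp
    then have "0 \<le> n * (D + K / 2)" using npos by simp
    then show ?thesis using True unfolding d_def by linarith
  next
    case False
    then have dpos: "d > 0" using dnn by auto
    then have Dpos: "D > 0" using dD by auto
    have main: "d \<le> n * (D + K / 2) + n * \<epsilon> * D / 4" if eps: "\<epsilon> > 0" for \<epsilon>
    proof -
      have "2 * d^2 / n \<le> d * (K + 2 * D + \<epsilon> * D / 2)"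
        unfolding d_def by (rule cde_lower_eps[OF sym irr fin wpos mpos cde npos Db eps])
      then have "d * (2 * d / n) \<le> d * (K + 2 * D + \<epsilon> * D / 2)"
        by (simp add: power2_eq_square mult.commute mult.left_commute)
      then have "2 * d / n \<le> K + 2 * D + \<epsilon> * D / 2" using dpos by (rule mult_left_le_imp_le)
      then have "2 * d \<le> n * (K + 2 * D + \<epsilon> * D / 2)" using npos by (simp add: field_simps)
      then show ?thesis by (simp add: algebra_simps)
    qed
    have "d \<le> n * (D + K / 2)"
    proof (rule field_le_epsilon)
      fix e :: real assume e: "e > 0"
      have "4 * e / (n * D) > 0" using e npos Dpos by simp
      from main[OF this] have "d \<le> n * (D + K / 2) + n * (4 * e / (n * D)) * D / 4" .
      also have "n * (4 * e / (n * D)) * D / 4 = e" using npos Dpos by (simp add: field_simps)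
      finally show "d \<le> n * (D + K / 2) + e" .
    qed
    then show ?thesis unfolding d_def .
  qed
qed

section \<open>Graph distance\<close>

lemma gdist_path:
  assumes "E\<^sup>*\<^sup>* v x0" shows "(E ^^ gdist E v x0) v x0"
proof -
  from rtranclp_imp_relpowp[OF assms] obtain k where "(E ^^ k) v x0" by blast
  then show ?thesis unfolding gdist_def by (rule LeastI)
qed

lemma gdist_le: "(E ^^ k) v x0 \<Longrightarrow> gdist E v x0 \<le> k"
  unfolding gdist_def by (rule Least_le)

lemma gdist_nbr:
  assumes sym: "\<And>a b. E a b \<Longrightarrow> E b a" and conn: "\<And>a b. E\<^sup>*\<^sup>* a b" and e: "E x y"
  shows "gdist E y x0 \<le> gdist E x x0 + 1"
proof -
  have "(E ^^ gdist E x x0) x x0" by (rule gdist_path[OF conn])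
  then have "(E ^^ Suc (gdist E x x0)) y x0" using sym[OF e] by (rule relpowp_Suc_I2[rotated])
  then show ?thesis using gdist_le by fastforce
qed

lemma finite_ball_nat:
  assumes sym: "\<And>a b. E a b \<Longrightarrow> E b a" and conn: "\<And>a b. E\<^sup>*\<^sup>* a b"
    and fin: "\<And>a. finite (nbrs E a)"
  shows "finite {v. gdist E v x0 \<le> k}"
proof (induction k)
  case 0
  have "{v. gdist E v x0 \<le> 0} \<subseteq> {x0}"
  proof
    fix v assume "v \<in> {v. gdist E v x0 \<le> 0}"
    then have "gdist E v x0 = 0" by simp
    then have "(E ^^ 0) v x0" using gdist_path[OF conn, of v x0] by simp
    then show "v \<in> {x0}" by simp
  qed
  then show ?case using finite_subset by blast
next
  case (Suc k)
  let ?B = "{v. gdist E v x0 \<le> k}"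
  have "{v. gdist E v x0 \<le> Suc k} \<subseteq> ?B \<union> (\<Union>z\<in>?B. nbrs E z)"
  proof
    fix v assume v: "v \<in> {v. gdist E v x0 \<le> Suc k}"
    show "v \<in> ?B \<union> (\<Union>z\<in>?B. nbrs E z)"
    proof (cases "gdist E v x0 \<le> k")
      case True then show ?thesis by simp
    next
      case False
      then have "gdist E v x0 = Suc k" using v by simp
      then have "(E ^^ Suc k) v x0" using gdist_path[OF conn, of v x0] by simp
      then obtain b where "E v b" "(E ^^ k) b x0" using relpowp_Suc_D2 by metis
      then have "b \<in> ?B" "v \<in> nbrs E b" using gdist_le sym unfolding nbrs_def by auto
      then show ?thesis by blast
    qed
  qed
  moreover have "finite (?B \<union> (\<Union>z\<in>?B. nbrs E z))" using Suc fin by auto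
  ultimately show ?case using finite_subset by blast
qed

definition phi :: "('a \<Rightarrow> 'a \<Rightarrow> bool) \<Rightarrow> 'a \<Rightarrow> real \<Rightarrow> 'a \<Rightarrow> real" where
  "phi E x0 R v = max 0 (min 1 ((2 * R - real (gdist E v x0)) / R))"

lemma phi_range: "0 \<le> phi E x0 R v" "phi E x0 R v \<le> 1"
  unfolding phi_def by auto

lemma phi_one: "R > 0 \<Longrightarrow> real (gdist E v x0) \<le> R \<Longrightarrow> phi E x0 R v = 1"
  unfolding phi_def by (simp add: field_simps)

lemma clamp_lip: "(a::real) \<le> b + c \<Longrightarrow> c \<ge> 0 \<Longrightarrow> max 0 (min 1 a) \<le> max 0 (min 1 b) + c"
  by (auto simp: max_def min_def)

lemma clamp_gt: "max 0 (min 1 (a::real)) > c \<Longrightarrow> c \<ge> 0 \<Longrightarrow> a > c"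
  by (auto simp: max_def min_def split: if_splits)

lemma phi_lip:
  assumes sym: "\<And>a b. E a b \<Longrightarrow> E b a" and conn: "\<And>a b. E\<^sup>*\<^sup>* a b" and e: "E x y"
    and R: "R > 0"
  shows "phi E x0 R x \<le> phi E x0 R y + 1 / R"
proof -
  have d: "real (gdist E y x0) \<le> real (gdist E x x0) + 1"
    using gdist_nbr[OF sym conn e, of x0] by simp
  have "(2 * R - real (gdist E x x0)) \<le> (2 * R - real (gdist E y x0)) + 1" using d by linarith
  then have "(2 * R - real (gdist E x x0)) / R \<le> ((2 * R - real (gdist E y x0)) + 1) / R"
    using R by (intro divide_right_mono) auto
  then have "(2 * R - real (gdist E x x0)) / R \<le> (2 * R - real (gdist E y x0)) / R + 1 / R"
    by (simp add: add_divide_distrib)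
  then show ?thesis unfolding phi_def using R by (intro clamp_lip) auto
qed

lemma phi_pos_dist:
  assumes R: "R > 0" and p: "phi E x0 R v > 0"
  shows "real (gdist E v x0) < 2 * R"
proof -
  have "(2 * R - real (gdist E v x0)) / R > 0" using clamp_gt[OF p[unfolded phi_def]] by simp
  then have "2 * R - real (gdist E v x0) > 0" using R by (simp add: zero_less_divide_iff)
  then show ?thesis by simp
qed

lemma phi_big_dist:
  assumes R: "R > 0" and p: "phi E x0 R v > 1 / R"
  shows "real (gdist E v x0) + 1 < 2 * R"
proof -
  have "1 / R < (2 * R - real (gdist E v x0)) / R" using clamp_gt[OF p[unfolded phi_def]] R by simp
  then have "1 < 2 * R - real (gdist E v x0)" using R by (simp add: divide_less_cancel)
  then show ?thesis by linarith
qed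

section \<open>Time derivatives\<close>

lemma h_deriv:
  fixes u ut :: "'a \<Rightarrow> real \<Rightarrow> real" and S :: "real set"
  assumes upos: "\<And>z. u z t > 0"
    and ud: "\<And>z. ((\<lambda>s. u z s) has_real_derivative ut z t) (at t within S)"
  shows "((\<lambda>s. - Lap E w mu (\<lambda>z. sqrt (u z s)) y / sqrt (u y s)) has_real_derivative
     (- (Lap E w mu (\<lambda>z. ut z t / (2 * sqrt (u z t))) y * sqrt (u y t)
         - Lap E w mu (\<lambda>z. sqrt (u z t)) y * (ut y t / (2 * sqrt (u y t)))) / (sqrt (u y t))^2))
     (at t within S)"
proof -
  have sd: "((\<lambda>s. sqrt (u z s)) has_real_derivative ut z t / (2 * sqrt (u z t))) (at t within S)" for z
  proof -
    have "u z t > 0" by (rule upos)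
    then show ?thesis using ud[of z] by (auto intro!: derivative_eq_intros simp: field_simps)
  qed
  have Ld: "((\<lambda>s. Lap E w mu (\<lambda>z. sqrt (u z s)) y) has_real_derivative
      Lap E w mu (\<lambda>z. ut z t / (2 * sqrt (u z t))) y) (at t within S)"
    unfolding Lap_def
    by (intro DERIV_cdivide DERIV_sum DERIV_cmult DERIV_diff sd)
  have nz: "sqrt (u y t) \<noteq> 0" using upos[of y] by simp
  have "((\<lambda>s. - Lap E w mu (\<lambda>z. sqrt (u z s)) y / sqrt (u y s)) has_real_derivative
     ((- Lap E w mu (\<lambda>z. ut z t / (2 * sqrt (u z t))) y) * sqrt (u y t)
       - (- Lap E w mu (\<lambda>z. sqrt (u z t)) y) * (ut y t / (2 * sqrt (u y t)))) / (sqrt (u y t) * sqrt (u y t)))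
     (at t within S)"
    by (rule DERIV_divide[OF DERIV_minus[OF Ld] sd nz])
  then show ?thesis by (simp add: power2_eq_square algebra_simps)
qed

lemma exists_max:
  fixes F :: "'a \<Rightarrow> real \<Rightarrow> real"
  assumes fin: "finite A" and ne: "A \<noteq> {}" and T: "T \<ge> 0"
    and cont: "\<And>y. y \<in> A \<Longrightarrow> continuous_on {0..T} (F y)"
  shows "\<exists>y\<in>A. \<exists>t\<in>{0..T}. \<forall>z\<in>A. \<forall>s\<in>{0..T}. F z s \<le> F y t"
proof -
  have "\<forall>y\<in>A. \<exists>t\<in>{0..T}. \<forall>s\<in>{0..T}. F y s \<le> F y t"
    using cont T by (intro ballI continuous_attains_sup) auto
  then obtain tm where tm: "\<And>y. y \<in> A \<Longrightarrow> tm y \<in> {0..T} \<and> (\<forall>s\<in>{0..T}. F y s \<le> F y (tm y))"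
    by metis
  let ?g = "\<lambda>y. F y (tm y)"
  have "Max (?g ` A) \<in> ?g ` A" using fin ne by (intro Max_in) auto
  then obtain y where y: "y \<in> A" "?g y = Max (?g ` A)" by auto
  have "\<forall>z\<in>A. \<forall>s\<in>{0..T}. F z s \<le> F y (tm y)"
  proof (intro ballI)
    fix z s assume z: "z \<in> A" and s: "s \<in> {0..T}"
    have "F z s \<le> ?g z" using tm[OF z] s by auto
    also have "?g z \<le> Max (?g ` A)" using fin z by (intro Max_ge) auto
    finally show "F z s \<le> F y (tm y)" using y by simp
  qed
  then show ?thesis using y tm by blast
qed

lemma quad_bound:
  fixes G n B C :: real
  assumes n: "n > 0" and C: "C \<ge> 0" and B: "B \<ge> 0"
    and q: "(2 / n) * G^2 \<le> G * B + C^2 * 2 / n"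
  shows "G \<le> n * B / 2 + C"
proof (rule ccontr)
  assume "\<not> G \<le> n * B / 2 + C"
  then have g: "G > n * B / 2 + C" by simp
  have nb: "n * B / 2 \<ge> 0" using n B by simp
  have G0: "G > 0" "G > C" using g nb C by linarith+
  have e1: "(2 / n) * G * G > (2 / n) * G * (n * B / 2 + C)" using g G0 n by (intro mult_strict_left_mono) auto
  have e2: "(2 / n) * G * (n * B / 2 + C) = G * B + (2 / n) * G * C" using n by (simp add: field_simps)
  have e3: "(2 / n) * G * C \<ge> (2 / n) * C * C"
  proof -
    have "C * C \<le> G * C" using G0 C by (intro mult_right_mono) auto
    then have "(2 / n) * (C * C) \<le> (2 / n) * (G * C)" using n by (intro mult_left_mono) auto
    then show ?thesis by (simp add: mult.assoc)
  qed
  have "(2 / n) * G^2 > G * B + (2 / n) * C * C" using e1 e2 e3 by (simp add: power2_eq_square)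
  then show False using q by (simp add: power2_eq_square mult.commute)
qed

lemma final_alg:
  fixes ph h ht Du G t T n K A lam D :: real
  assumes t: "t > 0" "t \<le> T" and ph: "0 < ph" "ph \<le> 1" and h: "h > 0" and n: "n > 0"
    and K: "K > 0" and A: "A \<ge> 0" and lam: "lam > 0" and D: "D \<ge> 0"
    and G: "G = t * ph * h" and GT: "G > T * lam * D"
    and dF: "ph * h + t * ph * ht \<ge> 0"
    and key: "ht \<le> Du - (2 / n) * h^2 + K * A"
    and lap: "ph^2 * Du \<le> A * (lam * ph * h + lam^2 * D)"
  shows "G \<le> n * (1 + 2 * T * A * lam) / 2 + T * sqrt (n * K * A / 2)"
proof -
  have tp: "t * ph \<ge> 0" using t ph by simp
  have "- (ph * h) \<le> t * ph * ht" using dF by linarith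
  also have "\<dots> \<le> t * ph * (Du - (2 / n) * h^2 + K * A)" using key tp by (rule mult_left_mono)
  finally have s1: "- (ph * h) \<le> t * ph * (Du - (2 / n) * h^2 + K * A)" .
  have "t * ph * (- (ph * h)) \<le> t * ph * (t * ph * (Du - (2 / n) * h^2 + K * A))"
    using s1 tp by (rule mult_left_mono)
  then have s2: "(2 / n) * G^2 \<le> t * ph^2 * h + t^2 * (ph^2 * Du) + t^2 * ph^2 * K * A"
    unfolding G by (simp add: power2_eq_square algebra_simps)
  have a1: "t * ph^2 * h \<le> G"
  proof -
    have "t * ph^2 * h = G * ph" unfolding G by (simp add: power2_eq_square)
    also have "\<dots> \<le> G * 1" using ph G t h by (intro mult_left_mono) auto
    finally show ?thesis by simp
  qed
  have tlD: "t * lam * D \<le> G"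
  proof -
    have "t * lam * D \<le> T * lam * D" using t lam D by (intro mult_right_mono) auto
    then show ?thesis using GT by linarith
  qed
  have a2: "t^2 * (ph^2 * Du) \<le> 2 * T * A * lam * G"
  proof -
    have "t^2 * (ph^2 * Du) \<le> t^2 * (A * (lam * ph * h + lam^2 * D))"
      using lap by (intro mult_left_mono) auto
    also have "\<dots> = A * lam * t * G + A * lam * t * (t * lam * D)"
      unfolding G by (simp add: power2_eq_square algebra_simps)
    also have "\<dots> \<le> A * lam * t * G + A * lam * t * G"
      using tlD A lam t by (intro add_left_mono mult_left_mono) auto
    also have "\<dots> \<le> A * lam * T * G + A * lam * T * G"
    proof -
      have "G \<ge> 0" using tlD t lam D by (smt (verit) mult_nonneg_nonneg)
      then have "A * lam * t * G \<le> A * lam * T * G" using A lam t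
        by (intro mult_right_mono mult_left_mono) auto
      then show ?thesis by linarith
    qed
    finally show ?thesis by (simp add: algebra_simps)
  qed
  have a3: "t^2 * ph^2 * K * A \<le> T^2 * K * A"
  proof -
    have "(t * ph)^2 \<le> T^2"
    proof -
      have "t * ph \<le> T" using t ph by (smt (verit) mult_left_le)
      then show ?thesis using tp by (intro power_mono) auto
    qed
    then have "(t * ph)^2 * (K * A) \<le> T^2 * (K * A)" using K A by (intro mult_right_mono) auto
    then show ?thesis by (simp add: power_mult_distrib algebra_simps)
  qed
  have q: "(2 / n) * G^2 \<le> G * (1 + 2 * T * A * lam) + (T * sqrt (n * K * A / 2))^2 * 2 / n"
  proof -
    have "(T * sqrt (n * K * A / 2))^2 * 2 / n = T^2 * K * A"
      using n K A by (simp add: power_mult_distrib field_simps)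
    then show ?thesis using s2 a1 a2 a3 by (simp add: algebra_simps)
  qed
  show ?thesis
    by (rule quad_bound[OF n _ _ q]) (use t A lam n K in auto)
qed

lemma per_y:
  fixes ph phy h hy lam D :: real
  assumes phy: "0 \<le> phy" and lip: "ph \<le> phy + lam" and mx: "phy * hy \<le> ph * h"
    and hy: "hy \<le> D" and h: "h > 0" and ph: "ph > 0" and lam: "lam > 0" and D: "D \<ge> 0"
  shows "ph^2 * (hy - h) \<le> lam * ph * h + lam^2 * D"
proof (cases "hy \<le> h")
  case True
  then have "ph^2 * (hy - h) \<le> 0" by (simp add: mult_nonneg_nonpos)
  moreover have "lam * ph * h + lam^2 * D \<ge> 0" using lam ph h D by simp
  ultimately show ?thesis by linarith
next
  case False
  then have hyh: "hy > h" by simp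
  then have hy0: "hy > 0" using h by simp
  have "ph^2 * (hy - h) = ph * (ph * hy - ph * h)" by (simp add: power2_eq_square algebra_simps)
  also have "\<dots> \<le> ph * (ph * hy - phy * hy)" using mx ph by (intro mult_left_mono) auto
  also have "\<dots> = ph * (ph - phy) * hy" by (simp add: algebra_simps)
  finally have e1: "ph^2 * (hy - h) \<le> ph * (ph - phy) * hy" .
  show ?thesis
  proof (cases "ph \<le> phy")
    case True
    then have "ph * (ph - phy) * hy \<le> 0" using ph hy0
      by (simp add: mult_nonneg_nonpos mult_nonpos_nonneg)
    moreover have "lam * ph * h + lam^2 * D \<ge> 0" using lam ph h D by simp
    ultimately show ?thesis using e1 by linarith
  next
    case False
    then have d0: "ph - phy > 0" by simp
    have dl: "ph - phy \<le> lam" using lip by simp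
    have "ph * (ph - phy) * hy \<le> (phy + lam) * (ph - phy) * hy"
      using lip d0 hy0 by (intro mult_right_mono) auto
    also have "\<dots> = (ph - phy) * (phy * hy) + lam * ((ph - phy) * hy)" by (simp add: algebra_simps)
    also have "\<dots> \<le> lam * (ph * h) + lam * (lam * D)"
    proof (rule add_mono)
      have "(ph - phy) * (phy * hy) \<le> lam * (phy * hy)"
        using dl phy hy0 by (intro mult_right_mono) auto
      also have "\<dots> \<le> lam * (ph * h)" using mx lam by (intro mult_left_mono) auto
      finally show "(ph - phy) * (phy * hy) \<le> lam * (ph * h)" .
      have "(ph - phy) * hy \<le> lam * D" using dl hy d0 lam hy0 by (intro mult_mono) auto
      then show "lam * ((ph - phy) * hy) \<le> lam * (lam * D)" using lam by (intro mult_left_mono) auto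
    qed
    finally show ?thesis using e1 by (simp add: power2_eq_square algebra_simps)
  qed
qed

lemma lap_bound:
  fixes W D c :: real
  assumes fpos: "\<And>y. f y > 0" and fin: "finite (nbrs E x)"
    and wpos: "\<And>y. y \<in> nbrs E x \<Longrightarrow> w x y > 0" and mpos: "mu x > 0"
    and Lneg: "Lap E w mu f x \<le> 0"
    and Wb: "\<And>y. y \<in> nbrs E x \<Longrightarrow> deg E w x / w x y \<le> W" and W1: "W \<ge> 1"
    and Db: "deg E w x / mu x \<le> D"
    and py: "\<And>y. y \<in> nbrs E x \<Longrightarrow> ph^2 * (hh y - hh x) \<le> c" and c: "c \<ge> 0"
  shows "ph^2 * ((\<Sum>y\<in>nbrs E x. w x y * (f y)^2 * (hh y - hh x)) / (mu x * (f x)^2)) \<le> c * (D * (1 + W))"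
proof -
  have fx: "f x > 0" by (rule fpos)
  have den: "mu x * (f x)^2 > 0" using mpos fx by simp
  have "ph^2 * (\<Sum>y\<in>nbrs E x. w x y * (f y)^2 * (hh y - hh x))
      = (\<Sum>y\<in>nbrs E x. w x y * (f y)^2 * (ph^2 * (hh y - hh x)))"
    by (simp add: sum_distrib_left algebra_simps)
  also have "\<dots> \<le> (\<Sum>y\<in>nbrs E x. w x y * (f y)^2 * c)"
  proof (rule sum_mono)
    fix y assume y: "y \<in> nbrs E x"
    have "w x y * (f y)^2 \<ge> 0" using wpos[OF y] by simp
    then show "w x y * (f y)^2 * (ph^2 * (hh y - hh x)) \<le> w x y * (f y)^2 * c"
      using py[OF y] by (intro mult_left_mono) auto
  qed
  also have "\<dots> = c * (\<Sum>y\<in>nbrs E x. w x y * (f y)^2)" by (simp add: sum_distrib_left algebra_simps)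
  also have "\<dots> \<le> c * ((1 + W) * deg E w x * (f x)^2)"
    using sq_bounds(1)[OF fpos fin wpos mpos Lneg Wb W1] c by (intro mult_left_mono) auto
  finally have s: "ph^2 * (\<Sum>y\<in>nbrs E x. w x y * (f y)^2 * (hh y - hh x)) \<le> c * ((1 + W) * deg E w x * (f x)^2)" .
  have "ph^2 * ((\<Sum>y\<in>nbrs E x. w x y * (f y)^2 * (hh y - hh x)) / (mu x * (f x)^2))
      = ph^2 * (\<Sum>y\<in>nbrs E x. w x y * (f y)^2 * (hh y - hh x)) / (mu x * (f x)^2)" by simp
  also have "\<dots> \<le> c * ((1 + W) * deg E w x * (f x)^2) / (mu x * (f x)^2)"
    using s den by (intro divide_right_mono) auto
  also have "\<dots> = c * (1 + W) * (deg E w x / mu x)" using fx mpos by (simp add: field_simps)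
  also have "\<dots> \<le> c * (1 + W) * D" using Db c W1 by (intro mult_left_mono) auto
  finally show ?thesis by (simp add: algebra_simps)
qed

theorem mainTheorem2:
  fixes E :: "'a \<Rightarrow> 'a \<Rightarrow> bool" and w :: "'a \<Rightarrow> 'a \<Rightarrow> real" and mu :: "'a \<Rightarrow> real"
    and n K R :: real and x0 :: 'a
    and u :: "'a \<Rightarrow> real \<Rightarrow> real" and u_t :: "'a \<Rightarrow> real \<Rightarrow> real"
  assumes graph: "weighted_graph E w mu"
    and has_edge: "\<exists>x y. E x y"
    and Dmu_fin: "bdd_above (range (\<lambda>x. deg E w x / mu x))"
    and Dw_fin: "bdd_above ((\<lambda>p. deg E w (fst p) / w (fst p) (snd p)) ` {(x, y). E x y})"
    and n_pos: "n > 0" and K_pos: "K > 0"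
    and CDE: "CDE E w mu n (- K)"
    and R_pos: "R > 0"
    and u_pos: "\<And>x t. t \<ge> 0 \<Longrightarrow> u x t > 0"
    and u_deriv: "\<And>x t. t \<ge> 0 \<Longrightarrow> ((\<lambda>s. u x s) has_real_derivative u_t x t) (at t within {0..})"
    and u_t_cont: "\<And>x. continuous_on {0..} (u_t x)"
    and heat: "\<And>x t. x \<in> gball E x0 (2 * R) \<Longrightarrow> t \<ge> 0 \<Longrightarrow>
                 u_t x t = Lap E w mu (\<lambda>y. u y t) x"
  shows "\<forall>x\<in>gball E x0 R. \<forall>t>0.
           Gam E w mu (\<lambda>y. sqrt (u y t)) (\<lambda>y. sqrt (u y t)) x / u x t
             - deriv (\<lambda>s. sqrt (u x s)) t / sqrt (u x t)
           \<le> n / (2 * t) + sqrt (n * K * D_mu E w mu * (D_w E w + 1) / 2)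
              + n * D_mu E w mu * (1 + D_w E w) / R"
proof (intro ballI allI impI)
  fix x and t :: real assume xB: "x \<in> gball E x0 R" and tpos: "t > 0"
  have sym: "\<And>a b. E a b \<Longrightarrow> E b a" using graph unfolding weighted_graph_def by blast
  have irr: "\<And>a. \<not> E a a" using graph unfolding weighted_graph_def by blast
  have conn: "\<And>a b. E\<^sup>*\<^sup>* a b" using graph unfolding weighted_graph_def by blast
  have fin: "\<And>a. finite (nbrs E a)" using graph unfolding weighted_graph_def by blast
  have wpos: "\<And>a b. E a b \<Longrightarrow> w a b > 0" using graph unfolding weighted_graph_def by blast
  have mpos: "\<And>a. mu a > 0" using graph unfolding weighted_graph_def by blast
  have wn: "\<And>a y. y \<in> nbrs E a \<Longrightarrow> w a y > 0" using wpos unfolding nbrs_def by auto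
  define D where "D = D_mu E w mu"
  define W where "W = D_w E w"
  define A where "A = D * (1 + W)"
  have Db: "\<And>z. deg E w z / mu z \<le> D" unfolding D_def D_mu_def by (rule cSUP_upper[OF UNIV_I Dmu_fin])
  have Wb: "\<And>a b. E a b \<Longrightarrow> deg E w a / w a b \<le> W"
  proof -
    fix a b assume "E a b"
    then have "(a, b) \<in> {(x, y). E x y}" by simp
    from cSUP_upper[OF this Dw_fin] show "deg E w a / w a b \<le> W" unfolding W_def D_w_def by simp
  qed
  have degw: "\<And>a b. E a b \<Longrightarrow> w a b \<le> deg E w a"
    unfolding deg_def using fin wn by (intro member_le_sum) (auto simp: nbrs_def intro: less_imp_le)
  have W1: "W \<ge> 1"
  proof -
    from has_edge obtain a b where ab: "E a b" by blast
    have "1 \<le> deg E w a / w a b" using degw[OF ab] wpos[OF ab] by simp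
    then show ?thesis using Wb[OF ab] by linarith
  qed
  have degnn: "\<And>a. deg E w a \<ge> 0" unfolding deg_def using wn by (intro sum_nonneg) (auto intro: less_imp_le)
  have Dnn: "D \<ge> 0" using Db[of x] degnn[of x] mpos[of x] by (smt (verit) divide_nonneg_pos)
  have Ann: "A \<ge> 0" unfolding A_def using Dnn W1 by simp
  define hT where "hT = (\<lambda>y s. - Lap E w mu (\<lambda>z. sqrt (u z s)) y / sqrt (u y s))"
  define htv where "htv = (\<lambda>y s. - (Lap E w mu (\<lambda>z. u_t z s / (2 * sqrt (u z s))) y * sqrt (u y s)
         - Lap E w mu (\<lambda>z. sqrt (u z s)) y * (u_t y s / (2 * sqrt (u y s)))) / (sqrt (u y s))^2)"
  have sqpos: "\<And>z s. s \<ge> 0 \<Longrightarrow> sqrt (u z s) > 0" using u_pos by simp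
  have sqsq: "\<And>z s. s \<ge> 0 \<Longrightarrow> sqrt (u z s) * sqrt (u z s) = u z s"
    using u_pos by (simp add: less_imp_le)
  have hle: "\<And>y s. s \<ge> 0 \<Longrightarrow> hT y s \<le> D"
  proof -
    fix y and s :: real assume s: "s \<ge> 0"
    have "hT y s \<le> deg E w y / mu y"
      unfolding hT_def by (rule h_le_deg[where f="\<lambda>z. sqrt (u z s)", OF sqpos[OF s] wn mpos])
    then show "hT y s \<le> D" using Db[of y] by linarith
  qed
  have t0: "t \<ge> 0" using tpos by simp
  have x2: "x \<in> gball E x0 (2 * R)" using xB R_pos unfolding gball_def by auto
  have lhs: "Gam E w mu (\<lambda>y. sqrt (u y t)) (\<lambda>y. sqrt (u y t)) x / u x t
      - deriv (\<lambda>s. sqrt (u x s)) t / sqrt (u x t) = hT x t"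
  proof -
    have at: "at t within {0..} = at t" using tpos
      by (intro at_within_interior) (simp add: interior_real_atLeast)
    have ud: "((\<lambda>s. u x s) has_real_derivative u_t x t) (at t)" using u_deriv[OF t0, of x] at by simp
    have "((\<lambda>s. sqrt (u x s)) has_real_derivative u_t x t / (2 * sqrt (u x t))) (at t)"
      using ud u_pos[OF t0, of x] by (auto intro!: derivative_eq_intros simp: field_simps)
    then have dv: "deriv (\<lambda>s. sqrt (u x s)) t = u_t x t / (2 * sqrt (u x t))" by (rule DERIV_imp_deriv)
    have "u_t x t = Lap E w mu (\<lambda>y. u y t) x" using heat[OF x2 t0] .
    also have "\<dots> = Lap E w mu (\<lambda>y. sqrt (u y t) * sqrt (u y t)) x"
      by (rule Lap_cong) (simp_all add: abs_of_pos[OF u_pos[OF t0]])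
    also have "\<dots> = 2 * Gam E w mu (\<lambda>y. sqrt (u y t)) (\<lambda>y. sqrt (u y t)) x
        + 2 * sqrt (u x t) * Lap E w mu (\<lambda>y. sqrt (u y t)) x" by (rule Gam_ff)
    finally have ut: "u_t x t = \<dots>" .
    have key: "G / (a * a) - ((2 * G + 2 * a * L) / (2 * a)) / a = - L / a" if "a > 0" for a G L :: real
      using that by (simp add: field_simps)
    have "Gam E w mu (\<lambda>y. sqrt (u y t)) (\<lambda>y. sqrt (u y t)) x / u x t
      - deriv (\<lambda>s. sqrt (u x s)) t / sqrt (u x t)
      = Gam E w mu (\<lambda>y. sqrt (u y t)) (\<lambda>y. sqrt (u y t)) x / (sqrt (u x t) * sqrt (u x t))
      - ((2 * Gam E w mu (\<lambda>y. sqrt (u y t)) (\<lambda>y. sqrt (u y t)) x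
        + 2 * sqrt (u x t) * Lap E w mu (\<lambda>y. sqrt (u y t)) x) / (2 * sqrt (u x t))) / sqrt (u x t)"
      unfolding dv ut[symmetric] sqsq[OF t0] ..
    also have "\<dots> = hT x t" unfolding hT_def by (rule key[OF sqpos[OF t0]])
    finally show ?thesis .
  qed
  define Q where "Q = n / (2 * t) + sqrt (n * K * D_mu E w mu * (D_w E w + 1) / 2)
      + n * D_mu E w mu * (1 + D_w E w) / R"
  have Qeq: "Q = n / (2 * t) + sqrt (n * K * A / 2) + n * A / R"
    unfolding Q_def A_def D_def W_def by (simp add: algebra_simps)
  have sq0: "sqrt (n * K * A / 2) \<ge> 0" using n_pos K_pos Ann by simp
  have nA0: "n * A / R \<ge> 0" using n_pos Ann R_pos by simp
  have nt0: "n / (2 * t) \<ge> 0" using n_pos tpos by simp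
  have "hT x t \<le> Q"
  proof (cases "n * (1 + W) < 1")
    case True
    have "D_mu E w mu \<le> n * (D + K / 2)"
      unfolding D_mu_def
      by (rule cSUP_least) (auto intro!: cde_lower[OF sym irr fin wpos mpos CDE n_pos Db K_pos])
    then have Dle: "D \<le> n * (D + K / 2)" unfolding D_def .
    have "D^2 \<le> n * K * A / 2"
    proof -
      have a: "D * (1 - n) \<le> n * K / 2" using Dle by (simp add: algebra_simps)
      have b: "(1 - n) * (1 + W) \<ge> 1" using True W1 by (simp add: algebra_simps)
      have "D^2 \<le> D^2 * ((1 - n) * (1 + W))" using b by (simp add: mult_le_cancel_left1)
      also have "\<dots> = (D * (1 - n)) * (D * (1 + W))" by (simp add: power2_eq_square algebra_simps)
      also have "\<dots> \<le> (n * K / 2) * (D * (1 + W))" using a Dnn W1 by (intro mult_right_mono) auto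
      finally show ?thesis unfolding A_def by (simp add: algebra_simps)
    qed
    then have "D \<le> sqrt (n * K * A / 2)" by (rule real_le_rsqrt)
    then show ?thesis using hle[OF t0, of x] unfolding Qeq using nt0 nA0 by linarith
  next
    case False
    then have nW: "n * (1 + W) \<ge> 1" by simp
    define S where "S = {v. gdist E v x0 \<le> nat \<lceil>2 * R\<rceil>}"
    have finS: "finite S" unfolding S_def by (rule finite_ball_nat[OF sym conn fin])
    have x0S: "x0 \<in> S"
    proof -
      have "gdist E x0 x0 \<le> 0" by (rule gdist_le) simp
      then show ?thesis unfolding S_def by simp
    qed
    have inS: "v \<in> S" if "phi E x0 R v > 0" for v
    proof -
      have "real (gdist E v x0) < 2 * R" by (rule phi_pos_dist[OF R_pos that])
      then have "gdist E v x0 \<le> nat \<lceil>2 * R\<rceil>" by linarith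
      then show ?thesis unfolding S_def by simp
    qed
    define F where "F = (\<lambda>y s. s * phi E x0 R y * hT y s)"
    have hd: "((\<lambda>s. hT y s) has_real_derivative htv y s) (at s within {0..})" if s: "s \<ge> 0" for y s
      unfolding hT_def htv_def
      by (rule h_deriv[where u=u and t=s and ut=u_t, OF u_pos[OF s] u_deriv[OF s]])
    have Fd: "((\<lambda>s. F y s) has_real_derivative (phi E x0 R y * hT y s + s * phi E x0 R y * htv y s))
        (at s within {0..})" if s: "s \<ge> 0" for y s
    proof -
      have "((\<lambda>s. s * phi E x0 R y) has_real_derivative phi E x0 R y) (at s within {0..})"
        by (auto intro!: derivative_eq_intros)
      from DERIV_mult[OF this hd[OF s]] show ?thesis unfolding F_def by (simp add: algebra_simps)
    qed
    have cont: "continuous_on {0..t} (F y)" for y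
    proof -
      have "continuous (at s within {0..t}) (F y)" if s: "s \<in> {0..t}" for s
      proof -
        have "continuous (at s within {0..}) (\<lambda>s. F y s)" using s by (intro DERIV_continuous[OF Fd]) auto
        then show ?thesis by (rule continuous_within_subset) auto
      qed
      then show ?thesis by (simp add: continuous_on_eq_continuous_within)
    qed
    obtain xs ts where xsS: "xs \<in> S" and ts: "ts \<in> {0..t}"
      and mx: "\<And>z s. z \<in> S \<Longrightarrow> s \<in> {0..t} \<Longrightarrow> F z s \<le> F xs ts"
      using exists_max[OF finS _ t0, of F] x0S cont by blast
    define G where "G = F xs ts"
    have F00: "F x0 0 = 0" unfolding F_def by simp
    have Gmax: "F z s \<le> G" if s: "s \<in> {0..t}" for z s
    proof (cases "z \<in> S")
      case True then show ?thesis using mx s unfolding G_def by blast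
    next
      case False
      then have "\<not> phi E x0 R z > 0" using inS by blast
      then have "phi E x0 R z = 0" using phi_range(1)[of E x0 R z] by linarith
      then have "F z s = 0" unfolding F_def by simp
      also have "0 \<le> G" using mx[OF x0S, of 0] t0 F00 unfolding G_def by simp
      finally show ?thesis .
    qed
    have phx: "phi E x0 R x = 1" using xB R_pos unfolding gball_def by (intro phi_one) auto
    have tx: "t * hT x t \<le> G" using Gmax[of t x] t0 phx unfolding F_def by simp
    show ?thesis
    proof (cases "G \<le> t * (1 / R) * D")
      case True
      then have "t * hT x t \<le> t * (D / R)" using tx by simp
      then have "hT x t \<le> D / R" using tpos by (rule mult_left_le_imp_le)
      also have "D / R \<le> n * A / R"
      proof -
        have "D * 1 \<le> D * (n * (1 + W))" using nW Dnn by (intro mult_left_mono) auto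
        then show ?thesis unfolding A_def using R_pos by (intro divide_right_mono) (auto simp: algebra_simps)
      qed
      finally show ?thesis unfolding Qeq using nt0 sq0 by linarith
    next
      case False
      then have GT: "G > t * (1 / R) * D" by simp
      define ph where "ph = phi E x0 R xs"
      define h where "h = hT xs ts"
      have Gdef: "G = ts * ph * h" unfolding G_def F_def ph_def h_def by simp
      have ts0: "ts \<ge> 0" "ts \<le> t" using ts by auto
      have G0: "G > 0" using GT tpos R_pos Dnn by (smt (verit) mult_nonneg_nonneg divide_nonneg_pos)
      have tsp: "ts > 0" using G0 ts0 unfolding Gdef by (cases "ts = 0") auto
      have ph0: "ph \<ge> 0" "ph \<le> 1" unfolding ph_def by (rule phi_range)+
      have php: "ph > 0" and hp: "h > 0"
      proof -
        have "ph * h > 0" using G0 tsp unfolding Gdef by (simp add: zero_less_mult_iff mult.assoc)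
        then show "ph > 0" "h > 0" using ph0 by (auto simp: zero_less_mult_iff)
      qed
      have hD: "h \<le> D" unfolding h_def by (rule hle[OF ts0(1)])
      have phbig: "ph > 1 / R"
      proof (rule ccontr)
        assume "\<not> ph > 1 / R"
        then have "ph \<le> 1 / R" by simp
        then have "ts * ph * h \<le> t * (1 / R) * D" using ts0 php hp hD R_pos
          by (intro mult_mono) auto
        then show False using GT unfolding Gdef by simp
      qed
      have dxs: "real (gdist E xs x0) + 1 < 2 * R" using phbig unfolding ph_def by (rule phi_big_dist[OF R_pos])
      have xs2: "xs \<in> gball E x0 (2 * R)" using dxs unfolding gball_def by simp
      have nb2: "y \<in> gball E x0 (2 * R)" if "y \<in> nbrs E xs" for y
      proof -
        have "gdist E y x0 \<le> gdist E xs x0 + 1" using that gdist_nbr[OF sym conn] unfolding nbrs_def by blast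
        then show ?thesis using dxs unfolding gball_def by simp
      qed
      define f where "f = (\<lambda>z. sqrt (u z ts))"
      define p where "p = (\<lambda>z. u_t z ts / (2 * sqrt (u z ts)))"
      have fpos: "\<And>z. f z > 0" unfolding f_def using sqpos[OF ts0(1)] .
      have pform: "p y = Lap E w mu f y + Gam E w mu f f y / f y" if y2: "y \<in> gball E x0 (2 * R)" for y
      proof -
        have "u_t y ts = Lap E w mu (\<lambda>z. u z ts) y" using heat[OF y2 ts0(1)] .
        also have "\<dots> = Lap E w mu (\<lambda>z. f z * f z) y"
          unfolding f_def by (rule Lap_cong) (simp_all add: abs_of_pos[OF u_pos[OF ts0(1)]])
        also have "\<dots> = 2 * Gam E w mu f f y + 2 * f y * Lap E w mu f y" by (rule Gam_ff)
        finally have "u_t y ts = \<dots>" .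
        moreover have "sqrt (u y ts) = f y" by (simp add: f_def)
        ultimately show ?thesis unfolding p_def using fpos[of y]
          by (simp add: field_simps)
      qed
      have cdex: "Gam2_tilde E w mu f xs \<ge> (Lap E w mu f xs)\<^sup>2 / n + (- K) * Gam E w mu f f xs"
        using CDE fpos unfolding CDE_def by blast
      have key: "htv xs ts \<le> (\<Sum>y\<in>nbrs E xs. w xs y * (f y)^2 * ((- Lap E w mu f y / f y) - (- Lap E w mu f xs / f xs))) / (mu xs * (f xs)^2)
         - (2 / n) * (- Lap E w mu f xs / f xs)^2 + 2 * K * Gam E w mu f f xs / (f xs)^2"
        unfolding htv_def
        using key_ineq[OF fpos pform[OF nb2] pform[OF xs2] cdex] unfolding f_def p_def .
      have hfx: "\<And>y. hT y ts = - Lap E w mu f y / f y" unfolding hT_def f_def by simp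
      have Lneg: "Lap E w mu f xs \<le> 0"
      proof -
        have "- Lap E w mu f xs / f xs > 0" using hp unfolding h_def hfx .
        then show ?thesis using fpos[of xs] by (auto simp: divide_less_0_iff)
      qed
      have WbN: "\<And>y. y \<in> nbrs E xs \<Longrightarrow> deg E w xs / w xs y \<le> W" using Wb unfolding nbrs_def by blast
      have Gb: "2 * K * Gam E w mu f f xs / (f xs)^2 \<le> K * A"
      proof -
        have s: "(\<Sum>y\<in>nbrs E xs. w xs y * (f y - f xs)^2) \<le> W * deg E w xs * (f xs)^2"
          by (rule sq_bounds(2)[OF fpos fin wn mpos Lneg WbN W1])
        have "2 * Gam E w mu f f xs / (f xs)^2 = (\<Sum>y\<in>nbrs E xs. w xs y * (f y - f xs)^2) / (mu xs * (f xs)^2)"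
          unfolding Gam_ff_sum using mpos[of xs] fpos[of xs] by (simp add: field_simps)
        also have "\<dots> \<le> W * deg E w xs * (f xs)^2 / (mu xs * (f xs)^2)"
          using s mpos[of xs] fpos[of xs] by (intro divide_right_mono) auto
        also have "\<dots> = W * (deg E w xs / mu xs)" using mpos[of xs] fpos[of xs] by (simp add: field_simps)
        also have "\<dots> \<le> W * D" using Db[of xs] W1 by (intro mult_left_mono) auto
        also have "\<dots> \<le> A" unfolding A_def using Dnn by (simp add: algebra_simps)
        finally have "2 * Gam E w mu f f xs / (f xs)^2 \<le> A" .
        then have "K * (2 * Gam E w mu f f xs / (f xs)^2) \<le> K * A" using K_pos by (intro mult_left_mono) auto
        then show ?thesis by (simp add: algebra_simps)
      qed
      define Du where "Du = (\<Sum>y\<in>nbrs E xs. w xs y * (f y)^2 * ((- Lap E w mu f y / f y) - (- Lap E w mu f xs / f xs))) / (mu xs * (f xs)^2)"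
      have key2: "htv xs ts \<le> Du - (2 / n) * h^2 + K * A"
        using key Gb unfolding Du_def h_def hfx by linarith
      have lap: "ph^2 * Du \<le> A * ((1 / R) * ph * h + (1 / R)^2 * D)"
      proof -
        have py: "ph^2 * (hT y ts - h) \<le> (1 / R) * ph * h + (1 / R)^2 * D" if y: "y \<in> nbrs E xs" for y
        proof (rule per_y)
          show "0 \<le> phi E x0 R y" by (rule phi_range)
          show "ph \<le> phi E x0 R y + 1 / R" unfolding ph_def
            using phi_lip[OF sym conn _ R_pos] y unfolding nbrs_def by blast
          have "ts * phi E x0 R y * hT y ts \<le> ts * ph * h" using Gmax[OF ts] unfolding F_def Gdef .
          then show "phi E x0 R y * hT y ts \<le> ph * h" using tsp by (simp add: mult.assoc)
          show "hT y ts \<le> D" by (rule hle[OF ts0(1)])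
        qed (use hp php R_pos Dnn h_def in auto)
        have c0: "(1 / R) * ph * h + (1 / R)^2 * D \<ge> 0" using php hp R_pos Dnn by simp
        have py': "ph^2 * ((- Lap E w mu f y / f y) - (- Lap E w mu f xs / f xs)) \<le> (1 / R) * ph * h + (1 / R)^2 * D"
          if y: "y \<in> nbrs E xs" for y
          using py[OF y] unfolding h_def hfx .
        have "ph^2 * Du \<le> ((1 / R) * ph * h + (1 / R)^2 * D) * (D * (1 + W))"
          unfolding Du_def
          by (rule lap_bound[where hh="\<lambda>y. - Lap E w mu f y / f y"])
             (blast intro: fpos fin wn mpos Lneg WbN W1 Db py' c0)+
        then show ?thesis unfolding A_def by (simp add: algebra_simps)
      qed
      have dF: "ph * h + ts * ph * htv xs ts \<ge> 0"
      proof (rule ccontr)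
        assume "\<not> ?thesis"
        then have neg: "ph * h + ts * ph * htv xs ts < 0" by simp
        have Fd': "((\<lambda>s. F xs s) has_real_derivative (ph * h + ts * ph * htv xs ts)) (at ts within {0..})"
          using Fd[OF ts0(1), of xs] unfolding ph_def h_def .
        from has_real_derivative_neg_dec_left[OF Fd' neg] obtain d where d: "d > 0"
          and dd: "\<And>hh. hh > 0 \<Longrightarrow> ts - hh \<in> {0..} \<Longrightarrow> hh < d \<Longrightarrow> F xs ts < F xs (ts - hh)" by blast
        define hh where "hh = min (d / 2) ts"
        have hh: "hh > 0" "ts - hh \<in> {0..}" "hh < d" unfolding hh_def using d tsp by auto
        have "F xs ts < F xs (ts - hh)" by (rule dd[OF hh])
        moreover have "F xs (ts - hh) \<le> G" using hh ts0 by (intro Gmax) auto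
        ultimately show False unfolding G_def by simp
      qed
      have GB: "G \<le> n * (1 + 2 * t * A * (1 / R)) / 2 + t * sqrt (n * K * A / 2)"
        by (rule final_alg[OF tsp ts0(2) php ph0(2) hp n_pos K_pos Ann _ Dnn Gdef GT dF key2 lap])
           (use R_pos in simp)
      have "t * hT x t \<le> t * (n / (2 * t) + n * A / R + sqrt (n * K * A / 2))"
      proof -
        have "n * (1 + 2 * t * A * (1 / R)) / 2 + t * sqrt (n * K * A / 2)
            = t * (n / (2 * t) + n * A / R + sqrt (n * K * A / 2))"
          using tpos R_pos by (simp add: field_simps)
        then show ?thesis using tx GB by linarith
      qed
      then have "hT x t \<le> n / (2 * t) + n * A / R + sqrt (n * K * A / 2)" using tpos by simp
      then show ?thesis unfolding Qeq by linarith
    qed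
  qed
  then show "Gam E w mu (\<lambda>y. sqrt (u y t)) (\<lambda>y. sqrt (u y t)) x / u x t
      - deriv (\<lambda>s. sqrt (u x s)) t / sqrt (u x t)
      \<le> n / (2 * t) + sqrt (n * K * D_mu E w mu * (D_w E w + 1) / 2) + n * D_mu E w mu * (1 + D_w E w) / R"
    unfolding lhs Q_def .
qed

end
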